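(* Let $P,Q$ be probability measures on $(\mathcal{X},\mathcal{A})$ and $\rho:\mathcal{X}\to[0,1]$ any measurable function. For each $N$, let $m=m_N,n=n_N$ be deterministic positive integers with $N=m+n$, $m\le n$, $m/N\to\pi\in(0,1)$, and let $X_1,\dots,X_m$ i.i.d. $\sim P$ and $Y_1,\dots,Y_n$ i.i.d. $\sim Q$ be independent. Let $\alpha\in(0,1)$ and define $$\hat A_0=\frac1m\sum_{i=1}^m\big(1-\mathbf 1\{\rho(X_i)>1/2\}\big),\qquad \hat A_1=\frac1n\sum_{j=1}^n\mathbf 1\{\rho(Y_j)>1/2\},$$ $$\hat\sigma=\sqrt{\frac{\hat A_0(1-\hat A_0)}{m}+\frac{\hat A_1(1-\hat A_1)}{n}},\qquad \hat\lambda^{\rho}_{\mathrm{bayes}}=\hat A_0+\hat A_1-1-q_{1-\alpha}\hat\sigma,$$ where $q_{1-\alpha}$ is the standard normal $(1-\alpha)$-quantile. Then $\limsup_{N\to\infty}\mathbb{P}(\hat\lambda^{\rho}_{\mathrm{bayes}}>\mathrm{TV}(P,Q))\le\alpha$.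
   Context: $\mathrm{TV}(P,Q)=\sup_{A\in\mathcal{A}}|P(A)-Q(A)|$. *)

theory Defs
  imports "HOL-Probability.Probability"
begin

definition TV :: "'a measure \<Rightarrow> 'a measure \<Rightarrow> real" where
  "TV P Q = (SUP A \<in> sets P. \<bar>measure P A - measure Q A\<bar>)"

definition std_normal_cdf :: "real \<Rightarrow> real" where
  "std_normal_cdf x = measure (density lborel std_normal_density) {..x}"

definition std_normal_quantile :: "real \<Rightarrow> real" where
  "std_normal_quantile p = (THE q. std_normal_cdf q = p)"

text \<open>The plug-in estimator; xs uses indices < m, ys uses indices < n.\<close>
definition A0_hat :: "('a \<Rightarrow> real) \<Rightarrow> nat \<Rightarrow> (nat \<Rightarrow> 'a) \<Rightarrow> real" where
  "A0_hat \<rho> m xs = (\<Sum>i<m. 1 - of_bool (\<rho> (xs i) > 1/2)) / real m"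

definition A1_hat :: "('a \<Rightarrow> real) \<Rightarrow> nat \<Rightarrow> (nat \<Rightarrow> 'a) \<Rightarrow> real" where
  "A1_hat \<rho> n ys = (\<Sum>j<n. of_bool (\<rho> (ys j) > 1/2)) / real n"

definition lambda_bayes_hat ::
  "real \<Rightarrow> ('a \<Rightarrow> real) \<Rightarrow> nat \<Rightarrow> nat \<Rightarrow> (nat \<Rightarrow> 'a) \<Rightarrow> (nat \<Rightarrow> 'a) \<Rightarrow> real" where
  "lambda_bayes_hat \<alpha> \<rho> m n xs ys =
     (let a0 = A0_hat \<rho> m xs; a1 = A1_hat \<rho> n ys;
          \<sigma> = sqrt (a0 * (1 - a0) / real m + a1 * (1 - a1) / real n)
      in a0 + a1 - 1 - std_normal_quantile (1 - \<alpha>) * \<sigma>)"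

definition sample_space :: "'a measure \<Rightarrow> 'a measure \<Rightarrow> nat \<Rightarrow> nat \<Rightarrow> ((nat \<Rightarrow> 'a) \<times> (nat \<Rightarrow> 'a)) measure" where
  "sample_space P Q m n = (PiM {..<m} (\<lambda>_. P)) \<Otimes>\<^sub>M (PiM {..<n} (\<lambda>_. Q))"

end

theory Submission
  imports Defs
begin
lemma Phi_eq_cdf: "std_normal_cdf = cdf std_normal_distribution"
  by (auto simp: std_normal_cdf_def cdf_def)

lemma Phi_cont: "isCont std_normal_cdf x"
proof -
  interpret real_distribution std_normal_distribution by (rule real_dist_normal_dist)
  have "emeasure std_normal_distribution {x} = 0"
    by (subst emeasure_density) (auto simp: nn_integral_indicator_singleton')
  then have "measure std_normal_distribution {x} = 0" by (simp add: measure_def)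
  then show ?thesis unfolding Phi_eq_cdf by (simp add: isCont_cdf)
qed

lemma Phi_strict: assumes "x < y" shows "std_normal_cdf x < std_normal_cdf y"
proof -
  interpret real_distribution std_normal_distribution by (rule real_dist_normal_dist)
  define M where "M = max \<bar>x\<bar> \<bar>y\<bar>"
  define c where "c = (1 / sqrt (2 * pi)) * exp (- M\<^sup>2 / 2)"
  have cpos: "c > 0" unfolding c_def by simp
  have low: "std_normal_density z \<ge> c" if "z \<in> {x<..y}" for z
  proof -
    have "\<bar>z\<bar> \<le> M" using that unfolding M_def by auto
    then have "z^2 \<le> M^2" by (metis abs_ge_zero power2_abs power_mono)
    then show ?thesis unfolding c_def std_normal_density_def
      by (intro mult_left_mono) (auto simp: divide_simps)
  qed
  have "ennreal (c * (y - x)) = (\<integral>\<^sup>+ z. ennreal c * indicator {x<..y} z \<partial>lborel)"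
    using assms cpos by (simp add: ennreal_mult nn_integral_cmult_indicator)
  also have "\<dots> \<le> (\<integral>\<^sup>+ z. ennreal (std_normal_density z) * indicator {x<..y} z \<partial>lborel)"
    by (intro nn_integral_mono) (auto split: split_indicator intro!: low)
  also have "\<dots> = emeasure std_normal_distribution {x<..y}"
    by (subst emeasure_density) auto
  finally have "c * (y - x) \<le> measure std_normal_distribution {x<..y}"
    by (simp add: emeasure_eq_measure)
  moreover have "c * (y - x) > 0" using cpos assms by simp
  moreover have "measure std_normal_distribution {x<..y} = cdf std_normal_distribution y - cdf std_normal_distribution x"
    using assms by (simp add: cdf_diff_eq)
  ultimately show ?thesis unfolding Phi_eq_cdf by simp
qed

lemma Phi_quantile:
  assumes "0 < p" "p < 1"
  shows "std_normal_cdf (std_normal_quantile p) = p"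
proof -
  interpret real_distribution std_normal_distribution by (rule real_dist_normal_dist)
  have "eventually (\<lambda>x. std_normal_cdf x < p) at_bot"
    using cdf_lim_at_bot assms unfolding Phi_eq_cdf by (auto simp: order_tendsto_iff)
  then obtain a where a: "std_normal_cdf a < p" by (auto simp: eventually_at_bot_linorder)
  have "eventually (\<lambda>x. std_normal_cdf x > p) at_top"
    using cdf_lim_at_top_prob assms unfolding Phi_eq_cdf by (auto simp: order_tendsto_iff)
  then obtain N where "\<forall>n\<ge>N. p < std_normal_cdf n" by (auto simp: eventually_at_top_linorder)
  then have b: "std_normal_cdf (max a N) > p" by simp
  have "\<exists>q\<ge>a. q \<le> max a N \<and> std_normal_cdf q = p"
    using a b by (intro IVT) (auto intro: Phi_cont less_imp_le)
  then obtain q where q: "std_normal_cdf q = p" by auto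
  have "std_normal_quantile p = q" unfolding std_normal_quantile_def
  proof (rule the_equality)
    fix q' assume "std_normal_cdf q' = p"
    with q show "q' = q" using Phi_strict by (metis linorder_neqE_linordered_idom less_irrefl)
  qed (rule q)
  with q show ?thesis by simp
qed

lemma core_limit:
  fixes \<mu> :: "real measure" and k :: "'b \<Rightarrow> nat" and c :: "'b \<Rightarrow> real"
  assumes mu: "real_distribution \<mu>" and bnd: "AE x in \<mu>. \<bar>x\<bar> \<le> 1"
    and mean: "integral\<^sup>L \<mu> (\<lambda>x. x) = 0" and var: "integral\<^sup>L \<mu> (\<lambda>x. x^2) = s2"
    and k: "filterlim k at_top F" and c: "(c \<longlongrightarrow> c0) F"
  shows "((\<lambda>N. char \<mu> (c N / sqrt (k N)) ^ k N) \<longlongrightarrow> complex_of_real (exp (- s2 * c0^2 / 2))) F"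
proof -
  interpret real_distribution \<mu> by (rule mu)
  have [simp]: "prob UNIV = 1" by (metis prob_space space_eq_univ)
  have int1: "integrable \<mu> (\<lambda>x. x)"
    using bnd by (intro integrable_const_bound[of _ 1]) auto
  have int2: "integrable \<mu> (\<lambda>x. x^2)"
    using bnd by (intro integrable_const_bound[of _ 1]) (auto simp: abs_square_le_1)
  have int3: "integrable \<mu> (\<lambda>x. \<bar>x\<bar>^3)"
    using bnd by (intro integrable_const_bound[of _ 1]) (auto simp: power_le_one)
  have s2_nn: "0 \<le> s2" unfolding var[symmetric] by (intro integral_nonneg_AE) auto
  have s2_le: "s2 \<le> 1"
  proof -
    have "s2 \<le> integral\<^sup>L \<mu> (\<lambda>x. 1)" unfolding var[symmetric]
      using bnd int2 by (intro integral_mono_AE) (auto simp: abs_square_le_1)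
    then show ?thesis by simp
  qed
  have m3: "expectation (\<lambda>x. \<bar>x\<bar>^3) \<le> 1"
  proof -
    have "expectation (\<lambda>x. \<bar>x\<bar>^3) \<le> integral\<^sup>L \<mu> (\<lambda>x. 1)"
      using bnd int3 by (intro integral_mono_AE) (auto simp: power_le_one)
    then show ?thesis by simp
  qed
  have variance: "variance (\<lambda>x. x) = s2" using mean var by simp
  define x where "x N = - s2 * (c N)^2 / 2" for N
  define x0 where "x0 = - s2 * c0^2 / 2"
  define w where "w N = 1 + x N / k N" for N
  have approx: "cmod (char \<mu> t - (1 - t^2 * s2 / 2)) \<le> \<bar>t\<bar>^3 / 6" for t
  proof -
    have "cmod (char \<mu> t - (1 - t^2 * s2 / 2)) \<le>
        (t^2 / 6) * expectation (\<lambda>x. min (6 * x^2) (abs t * (abs x)^3))"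
      by (rule char_approx3[OF int1 mean int2 variance])
    also have "expectation (\<lambda>x. min (6 * x^2) (abs t * (abs x)^3)) \<le> expectation (\<lambda>x. abs t * (abs x)^3)"
      using int3 int2 by (intro integral_mono) auto
    also have "\<dots> = \<bar>t\<bar> * expectation (\<lambda>x. (abs x)^3)" by simp
    also have "\<dots> \<le> \<bar>t\<bar>" using m3 mult_left_mono[OF m3, of "\<bar>t\<bar>"] by simp
    finally show ?thesis
      by (simp add: mult_left_mono power3_eq_cube power2_eq_square divide_right_mono abs_mult)
  qed
  have cb: "eventually (\<lambda>N. \<bar>c N\<bar> \<le> \<bar>c0\<bar> + 1) F"
  proof -
    have "eventually (\<lambda>N. dist (c N) c0 < 1) F" using c by (rule tendstoD) simp
    then show ?thesis by eventually_elim (auto simp: dist_real_def)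
  qed
  have kb: "eventually (\<lambda>N. real (k N) \<ge> (\<bar>c0\<bar> + 1)^2 + 1) F"
  proof -
    have "eventually (\<lambda>N. k N \<ge> nat \<lceil>(\<bar>c0\<bar> + 1)^2 + 1\<rceil>) F"
      using k by (simp add: filterlim_at_top)
    then show ?thesis by eventually_elim linarith
  qed
  have x_bnd: "eventually (\<lambda>N. \<bar>x N\<bar> \<le> real (k N) \<and> \<bar>x0\<bar> \<le> real (k N) \<and> 0 < k N) F"
    using cb kb
  proof eventually_elim
    case (elim N)
    have "(c N)^2 \<le> (\<bar>c0\<bar> + 1)^2" using elim(1)
      by (metis abs_ge_zero power2_abs power_mono)
    then have "s2 * (c N)^2 \<le> 1 * (\<bar>c0\<bar> + 1)^2" using s2_nn s2_le
      by (intro mult_mono) auto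
    then have 1: "\<bar>x N\<bar> \<le> (\<bar>c0\<bar> + 1)^2" unfolding x_def using s2_nn by (simp add: abs_mult) (smt (verit) zero_le_power2)
    have "c0^2 \<le> (\<bar>c0\<bar> + 1)^2"
      by (metis abs_ge_zero power2_abs power_mono le_add_same_cancel1 zero_le_one)
    then have "s2 * c0^2 \<le> 1 * (\<bar>c0\<bar> + 1)^2" using s2_nn s2_le
      by (intro mult_mono) auto
    then have 2: "\<bar>x0\<bar> \<le> (\<bar>c0\<bar> + 1)^2" unfolding x0_def using s2_nn by (simp add: abs_mult) (smt (verit) zero_le_power2)
    show ?case using 1 2 elim(2) by auto
  qed
  have step1: "((\<lambda>N. char \<mu> (c N / sqrt (k N)) ^ k N - complex_of_real (w N ^ k N)) \<longlongrightarrow> 0) F"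
  proof (rule Lim_null_comparison)
    show "eventually (\<lambda>N. norm (char \<mu> (c N / sqrt (k N)) ^ k N - complex_of_real (w N ^ k N))
         \<le> \<bar>c N\<bar>^3 / 6 / sqrt (k N)) F"
      using x_bnd
    proof eventually_elim
      case (elim N)
      have kpos: "real (k N) > 0" using elim by simp
      have "x N \<le> 0" unfolding x_def using s2_nn by simp
      then have "\<bar>w N\<bar> \<le> 1"
        using elim kpos unfolding w_def by (auto simp: abs_le_iff field_simps)
      then have w1: "norm (complex_of_real (w N)) \<le> 1" by simp
      have e: "1 - (c N / sqrt (k N))^2 * s2 / 2 = w N"
        using kpos unfolding w_def x_def by (simp add: power_divide ac_simps)
      have "norm (char \<mu> (c N / sqrt (k N)) ^ k N - complex_of_real (w N) ^ k N)
          \<le> k N * norm (char \<mu> (c N / sqrt (k N)) - complex_of_real (w N))"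
        by (rule norm_power_diff[OF cmod_char_le_1 w1])
      also have "norm (char \<mu> (c N / sqrt (k N)) - complex_of_real (w N)) \<le> \<bar>c N / sqrt (k N)\<bar>^3 / 6"
        using approx[of "c N / sqrt (k N)"] unfolding e by simp
      finally have "norm (char \<mu> (c N / sqrt (k N)) ^ k N - complex_of_real (w N) ^ k N)
          \<le> k N * (\<bar>c N / sqrt (k N)\<bar>^3 / 6)" using kpos
        by (smt (verit) mult_left_mono of_nat_0_le_iff)
      also have "k N * (\<bar>c N / sqrt (k N)\<bar>^3 / 6) = \<bar>c N\<bar>^3 / 6 / sqrt (k N)"
      proof -
        have "sqrt (k N) ^ 3 = k N * sqrt (k N)" using kpos
          by (simp add: power3_eq_cube)
        then show ?thesis using kpos by (simp add: power_divide abs_div field_simps)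
      qed
      finally show ?case by simp
    qed
    have "filterlim (\<lambda>N. sqrt (real (k N))) at_top F"
      by (rule filterlim_compose[OF sqrt_at_top filterlim_compose[OF filterlim_real_sequentially k]])
    then show "((\<lambda>N. \<bar>c N\<bar>^3 / 6 / sqrt (k N)) \<longlongrightarrow> 0) F"
      by (intro tendsto_divide_0[OF _ filterlim_at_top_imp_at_infinity])
         (auto intro!: tendsto_eq_intros c)
  qed
  have step2: "((\<lambda>N. w N ^ k N - (1 + x0 / k N) ^ k N) \<longlongrightarrow> 0) F"
  proof (rule Lim_null_comparison)
    show "eventually (\<lambda>N. norm (w N ^ k N - (1 + x0 / k N) ^ k N) \<le> \<bar>x N - x0\<bar>) F"
      using x_bnd
    proof eventually_elim
      case (elim N)
      have kpos: "real (k N) > 0" using elim by simp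
      have "norm (w N ^ k N - (1 + x0 / k N) ^ k N) \<le> k N * norm (w N - (1 + x0 / k N))"
        using elim kpos unfolding w_def x_def x0_def
        by (intro norm_power_diff) (auto simp: abs_le_iff field_simps s2_nn)
      also have "\<dots> = \<bar>x N - x0\<bar>" using kpos unfolding w_def
        by (simp add: field_simps abs_div) (metis abs_mult abs_of_nat left_diff_distrib mult.commute)
      finally show ?case .
    qed
    show "((\<lambda>N. \<bar>x N - x0\<bar>) \<longlongrightarrow> 0) F"
      unfolding x_def x0_def using c by (auto intro!: tendsto_eq_intros)
  qed
  have step3: "((\<lambda>N. (1 + x0 / k N) ^ k N) \<longlongrightarrow> exp x0) F"
    using tendsto_exp_limit_sequentially[of x0] k by (rule filterlim_compose)
  have "((\<lambda>N. w N ^ k N) \<longlongrightarrow> exp x0) F"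
    by (rule Lim_transform[OF step3]) (use step2 in simp)
  then have "((\<lambda>N. complex_of_real (w N ^ k N)) \<longlongrightarrow> complex_of_real (exp x0)) F"
    by (rule tendsto_of_real)
  then show ?thesis unfolding x0_def
    by (rule Lim_transform) (use step1 in simp)
qed

lemma char_distr_eq: "prob_space M \<Longrightarrow> T \<in> borel_measurable M \<Longrightarrow>
   char (distr M borel T) t = (CLINT \<omega>|M. iexp (t * T \<omega>))"
  unfolding char_def by (simp add: integral_distr)

lemma cdf_distr_eq: "prob_space M \<Longrightarrow> T \<in> borel_measurable M \<Longrightarrow>
   cdf (distr M borel T) x = measure M {\<omega> \<in> space M. T \<omega> \<le> x}"
  unfolding cdf_def by (subst measure_distr) (auto simp: vimage_def Int_def conj_commute)

lemma normal_limit_cdf: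
  fixes \<Omega> :: "nat \<Rightarrow> 'b measure"
  assumes ps: "\<And>N. prob_space (\<Omega> N)" and meas: "\<And>N. T N \<in> borel_measurable (\<Omega> N)"
    and ch: "\<And>t. (\<lambda>N. char (distr (\<Omega> N) borel (T N)) t) \<longlonglongrightarrow> complex_of_real (exp (- ((\<tau> * t)^2) / 2))"
    and tau: "\<tau> > 0"
  shows "(\<lambda>N. measure (\<Omega> N) {\<omega> \<in> space (\<Omega> N). T N \<omega> \<le> x}) \<longlonglongrightarrow> std_normal_cdf (x / \<tau>)"
proof -
  interpret SN: real_distribution std_normal_distribution by (rule real_dist_normal_dist)
  define M' where "M' = distr std_normal_distribution borel (\<lambda>z. \<tau> * z)"
  have rd: "real_distribution M'" unfolding M'_def by (rule SN.real_distribution_distr) simp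
  have charM': "char M' t = complex_of_real (exp (- ((\<tau> * t)^2) / 2))" for t
  proof -
    have "char M' t = char std_normal_distribution (t * \<tau>)"
      unfolding M'_def char_def by (subst integral_distr) (auto simp: ac_simps)
    then show ?thesis by (simp add: char_std_normal_distribution ac_simps)
  qed
  have cdfM': "cdf M' y = std_normal_cdf (y / \<tau>)" for y
  proof -
    have "cdf M' y = measure std_normal_distribution {z. \<tau> * z \<le> y}"
      unfolding M'_def cdf_def by (subst measure_distr) (auto simp: vimage_def)
    also have "{z. \<tau> * z \<le> y} = {..y / \<tau>}" using tau by (auto simp: field_simps)
    finally show ?thesis by (simp add: std_normal_cdf_def)
  qed
  have wc: "weak_conv_m (\<lambda>N. distr (\<Omega> N) borel (T N)) M'"
  proof (rule levy_continuity)
    show "(\<lambda>N. char (distr (\<Omega> N) borel (T N)) t) \<longlonglongrightarrow> char M' t" for t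
      unfolding charM' by (rule ch)
  qed (auto intro: prob_space.real_distribution_distr ps meas rd)
  have "isCont (cdf M') x"
  proof -
    have "isCont (\<lambda>y. std_normal_cdf (y / \<tau>)) x"
      using tau by (intro continuous_intros isCont_o2[OF _ Phi_cont]) auto
    then show ?thesis by (simp add: cdfM' [abs_def])
  qed
  with wc have "(\<lambda>N. cdf (distr (\<Omega> N) borel (T N)) x) \<longlonglongrightarrow> cdf M' x"
    unfolding weak_conv_m_def weak_conv_def by blast
  then show ?thesis by (simp add: cdf_distr_eq ps meas cdfM')
qed

lemma zero_limit_prob:
  fixes \<Omega> :: "nat \<Rightarrow> 'b measure"
  assumes ps: "\<And>N. prob_space (\<Omega> N)" and meas: "\<And>N. T N \<in> borel_measurable (\<Omega> N)"
    and ch: "\<And>t. (\<lambda>N. char (distr (\<Omega> N) borel (T N)) t) \<longlonglongrightarrow> 1"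
    and eta: "\<eta> > 0"
  shows "(\<lambda>N. measure (\<Omega> N) {\<omega> \<in> space (\<Omega> N). \<bar>T N \<omega>\<bar> > \<eta>}) \<longlonglongrightarrow> 0"
proof -
  define M' :: "real measure" where "M' = return borel 0"
  have rd: "real_distribution M'" unfolding M'_def
    by (simp add: real_distribution_def real_distribution_axioms_def prob_space_return)
  have charM': "char M' t = 1" for t unfolding M'_def char_def by (simp add: integral_return)
  have cdfM': "cdf M' y = (if 0 \<le> y then 1 else 0)" for y
    unfolding M'_def cdf_def by (simp add: measure_return)
  have wc: "weak_conv_m (\<lambda>N. distr (\<Omega> N) borel (T N)) M'"
    by (rule levy_continuity) (auto intro: prob_space.real_distribution_distr ps meas rd simp: charM' ch)
  have cont: "isCont (cdf M') y" if "y \<noteq> 0" for y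
  proof -
    interpret real_distribution M' by (rule rd)
    have "measure M' {y} = 0" using that by (simp add: M'_def measure_return)
    then show ?thesis using isCont_cdf by blast
  qed
  have l1: "(\<lambda>N. measure (\<Omega> N) {\<omega> \<in> space (\<Omega> N). T N \<omega> \<le> \<eta>}) \<longlonglongrightarrow> 1"
    using wc cont[of \<eta>] eta unfolding weak_conv_m_def weak_conv_def
    by (auto simp: cdf_distr_eq ps meas cdfM')
  have l2: "(\<lambda>N. measure (\<Omega> N) {\<omega> \<in> space (\<Omega> N). T N \<omega> \<le> - \<eta>}) \<longlonglongrightarrow> 0"
    using wc cont[of "-\<eta>"] eta unfolding weak_conv_m_def weak_conv_def
    by (auto simp: cdf_distr_eq ps meas cdfM')
  show ?thesis
  proof (rule tendsto_sandwich[of "\<lambda>_. 0" _ _ "\<lambda>N. measure (\<Omega> N) {\<omega> \<in> space (\<Omega> N). T N \<omega> \<le> - \<eta>}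
        + (1 - measure (\<Omega> N) {\<omega> \<in> space (\<Omega> N). T N \<omega> \<le> \<eta>})"])
    show "\<forall>\<^sub>F N in sequentially. measure (\<Omega> N) {\<omega> \<in> space (\<Omega> N). \<bar>T N \<omega>\<bar> > \<eta>}
       \<le> measure (\<Omega> N) {\<omega> \<in> space (\<Omega> N). T N \<omega> \<le> - \<eta>}
        + (1 - measure (\<Omega> N) {\<omega> \<in> space (\<Omega> N). T N \<omega> \<le> \<eta>})"
    proof (intro always_eventually allI)
      fix N
      interpret prob_space "\<Omega> N" by (rule ps)
      have [measurable]: "T N \<in> borel_measurable (\<Omega> N)" by (rule meas)
      have "{\<omega> \<in> space (\<Omega> N). \<bar>T N \<omega>\<bar> > \<eta>} \<subseteq> {\<omega> \<in> space (\<Omega> N). T N \<omega> \<le> - \<eta>} \<union>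
            (space (\<Omega> N) - {\<omega> \<in> space (\<Omega> N). T N \<omega> \<le> \<eta>})" by auto
      then have "prob {\<omega> \<in> space (\<Omega> N). \<bar>T N \<omega>\<bar> > \<eta>} \<le> prob ({\<omega> \<in> space (\<Omega> N). T N \<omega> \<le> - \<eta>} \<union>
            (space (\<Omega> N) - {\<omega> \<in> space (\<Omega> N). T N \<omega> \<le> \<eta>}))"
        by (intro finite_measure_mono) auto
      also have "\<dots> \<le> prob {\<omega> \<in> space (\<Omega> N). T N \<omega> \<le> - \<eta>} + prob (space (\<Omega> N) - {\<omega> \<in> space (\<Omega> N). T N \<omega> \<le> \<eta>})"
        by (intro measure_Un_le) auto
      also have "prob (space (\<Omega> N) - {\<omega> \<in> space (\<Omega> N). T N \<omega> \<le> \<eta>}) = 1 - prob {\<omega> \<in> space (\<Omega> N). T N \<omega> \<le> \<eta>}"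
        by (intro prob_compl) auto
      finally show "prob {\<omega> \<in> space (\<Omega> N). \<bar>T N \<omega>\<bar> > \<eta>} \<le> prob {\<omega> \<in> space (\<Omega> N). T N \<omega> \<le> - \<eta>} + (1 - prob {\<omega> \<in> space (\<Omega> N). T N \<omega> \<le> \<eta>})" .
    qed
    show "(\<lambda>N. measure (\<Omega> N) {\<omega> \<in> space (\<Omega> N). T N \<omega> \<le> - \<eta>}
        + (1 - measure (\<Omega> N) {\<omega> \<in> space (\<Omega> N). T N \<omega> \<le> \<eta>})) \<longlonglongrightarrow> 0"
      using tendsto_add[OF l2 tendsto_diff[OF tendsto_const[of 1] l1]] by simp
  qed simp_all
qed

lemma char_PiM_sum:
  assumes P: "prob_space P" and g[measurable]: "g \<in> borel_measurable P"
  shows "char (distr (PiM {..<k} (\<lambda>_. P)) borel (\<lambda>x. \<Sum>i<k. g (x i))) t = char (distr P borel g) t ^ k"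
proof -
  interpret P: prob_space P by (rule P)
  interpret PP: product_sigma_finite "\<lambda>_::nat. P"
    by (simp add: product_sigma_finite_def P.sigma_finite_measure_axioms)
  have ps: "prob_space (PiM {..<k} (\<lambda>_. P))" by (rule prob_space_PiM) (rule P)
  have "char (distr (PiM {..<k} (\<lambda>_. P)) borel (\<lambda>x. \<Sum>i<k. g (x i))) t =
      (CLINT x|PiM {..<k} (\<lambda>_. P). iexp (t * (\<Sum>i<k. g (x i))))"
    by (rule char_distr_eq[OF ps]) measurable
  also have "\<dots> = (CLINT x|PiM {..<k} (\<lambda>_. P). (\<Prod>i<k. iexp (t * g (x i))))"
    by (intro Bochner_Integration.integral_cong refl)
       (simp add: sum_distrib_left exp_sum[symmetric] ring_distribs)
  also have "\<dots> = (\<Prod>i<k. CLINT y|P. iexp (t * g y))"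
    by (rule PP.product_integral_prod) (auto intro!: P.integrable_iexp)
  also have "\<dots> = char (distr P borel g) t ^ k"
    by (simp add: char_distr_eq[OF P g])
  finally show ?thesis .
qed

lemma char_scale: "prob_space P \<Longrightarrow> h \<in> borel_measurable P \<Longrightarrow>
  char (distr P borel (\<lambda>x. c * h x)) t = char (distr P borel h) (c * t)"
  by (simp add: char_distr_eq ac_simps)

lemma bern_props:
  assumes P: "prob_space P" and h[measurable]: "h \<in> borel_measurable P"
    and h01: "\<And>x. x \<in> space P \<Longrightarrow> h x = 0 \<or> h x = 1" and p: "p = integral\<^sup>L P h"
  shows "real_distribution (distr P borel (\<lambda>x. h x - p))"
    and "AE x in distr P borel (\<lambda>x. h x - p). \<bar>x\<bar> \<le> 1"
    and "integral\<^sup>L (distr P borel (\<lambda>x. h x - p)) (\<lambda>x. x) = 0"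
    and "integral\<^sup>L (distr P borel (\<lambda>x. h x - p)) (\<lambda>x. x^2) = p * (1 - p)"
    and "0 \<le> p" "p \<le> 1"
proof -
  interpret P: prob_space P by (rule P)
  have hb: "\<bar>h x\<bar> \<le> 1" "0 \<le> h x" "h x \<le> 1" if "x \<in> space P" for x
    using h01[OF that] by auto
  have int: "integrable P h"
    using hb by (intro P.integrable_const_bound[of _ 1]) auto
  show p0: "0 \<le> p" unfolding p using hb by (intro integral_nonneg_AE) auto
  have "p \<le> integral\<^sup>L P (\<lambda>_. 1)" unfolding p using hb int
    by (intro integral_mono) auto
  then show p1: "p \<le> 1" by (simp add: P.prob_space)
  show "real_distribution (distr P borel (\<lambda>x. h x - p))" by (rule P.real_distribution_distr) simp
  show "AE x in distr P borel (\<lambda>x. h x - p). \<bar>x\<bar> \<le> 1"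
  proof (subst AE_distr_iff)
    show "AE x in P. \<bar>h x - p\<bar> \<le> 1"
    proof (rule AE_I2)
      fix x assume "x \<in> space P"
      then show "\<bar>h x - p\<bar> \<le> 1" using h01[of x] p0 p1 by auto
    qed
  qed simp_all
  show "integral\<^sup>L (distr P borel (\<lambda>x. h x - p)) (\<lambda>x. x) = 0"
    using int by (simp add: integral_distr P.prob_space p)
  have hh: "integral\<^sup>L P (\<lambda>x. (h x - p)^2) = integral\<^sup>L P (\<lambda>x. (1 - 2 * p) * h x + p^2)"
    using h01 by (intro Bochner_Integration.integral_cong refl) (auto simp: power2_eq_square algebra_simps)
  have "integral\<^sup>L (distr P borel (\<lambda>x. h x - p)) (\<lambda>x. x^2) = integral\<^sup>L P (\<lambda>x. (h x - p)^2)"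
    by (simp add: integral_distr)
  also have "\<dots> = integral\<^sup>L P (\<lambda>x. (1 - 2 * p) * h x + p^2)" by (rule hh)
  also have "\<dots> = (1 - 2 * p) * p + p^2" using int by (simp add: P.prob_space p[symmetric])
  also have "\<dots> = p * (1 - p)" by algebra
  finally show "integral\<^sup>L (distr P borel (\<lambda>x. h x - p)) (\<lambda>x. x^2) = p * (1 - p)" .
qed

lemma char_pair_add:
  assumes A: "prob_space A" and B: "prob_space B"
    and F[measurable]: "F \<in> borel_measurable A" and G[measurable]: "G \<in> borel_measurable B"
  shows "char (distr (A \<Otimes>\<^sub>M B) borel (\<lambda>\<omega>. F (fst \<omega>) + G (snd \<omega>))) t
     = char (distr A borel F) t * char (distr B borel G) t"
proof -
  interpret A: prob_space A by (rule A)
  interpret B: prob_space B by (rule B)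
  interpret AB: pair_sigma_finite A B by unfold_locales
  have ps: "prob_space (A \<Otimes>\<^sub>M B)" by (rule prob_space_pair[OF A B])
  interpret AB': prob_space "A \<Otimes>\<^sub>M B" by (rule ps)
  have "char (distr (A \<Otimes>\<^sub>M B) borel (\<lambda>\<omega>. F (fst \<omega>) + G (snd \<omega>))) t =
      (CLINT \<omega>|A \<Otimes>\<^sub>M B. iexp (t * (F (fst \<omega>) + G (snd \<omega>))))"
    by (rule char_distr_eq[OF ps]) measurable
  also have "\<dots> = (CLINT \<omega>|A \<Otimes>\<^sub>M B. iexp (t * F (fst \<omega>)) * iexp (t * G (snd \<omega>)))"
    by (intro Bochner_Integration.integral_cong refl) (simp add: ring_distribs exp_add)
  also have "\<dots> = (CLINT x|A. (CLINT y|B. iexp (t * F (fst (x, y))) * iexp (t * G (snd (x, y)))))"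
    by (rule AB.integral_fst'[symmetric])
       (intro AB'.integrable_const_bound[where B=1], auto simp: norm_mult)
  also have "\<dots> = (CLINT x|A. iexp (t * F x) * (CLINT y|B. iexp (t * G y)))"
    by simp
  also have "\<dots> = (CLINT x|A. iexp (t * F x)) * (CLINT y|B. iexp (t * G y))"
    by simp
  also have "\<dots> = char (distr A borel F) t * char (distr B borel G) t"
    by (simp add: char_distr_eq[OF A F] char_distr_eq[OF B G])
  finally show ?thesis .
qed

lemma sqrt_diff_le: fixes a b :: real shows "0 \<le> a \<Longrightarrow> 0 \<le> b \<Longrightarrow> \<bar>sqrt a - sqrt b\<bar> \<le> sqrt \<bar>a - b\<bar>"
proof -
  have *: "sqrt a - sqrt b \<le> sqrt \<bar>a - b\<bar>" if "0 \<le> a" "0 \<le> b" for a b :: real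
  proof (cases "b \<le> a")
    case True
    have "sqrt a = sqrt (b + (a - b))" by simp
    also have "\<dots> \<le> sqrt b + sqrt (a - b)" using True that by (intro sqrt_add_le_add_sqrt) auto
    finally show ?thesis using True by simp
  next
    case False
    then have "sqrt a \<le> sqrt b" by simp
    then show ?thesis by (smt (verit) real_sqrt_ge_zero)
  qed
  assume "0 \<le> a" "0 \<le> b"
  then show ?thesis using *[of a b] *[of b a] by (simp add: abs_minus_commute abs_le_iff)
qed

lemma var_lip: fixes x y :: real shows "0 \<le> x \<Longrightarrow> x \<le> 1 \<Longrightarrow> 0 \<le> y \<Longrightarrow> y \<le> 1 \<Longrightarrow> \<bar>x * (1 - x) - y * (1 - y)\<bar> \<le> \<bar>x - y\<bar>"
proof -
  assume a: "0 \<le> x" "x \<le> 1" "0 \<le> y" "y \<le> 1"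
  have "x * (1 - x) - y * (1 - y) = (x - y) * (1 - x - y)" by algebra
  then have "\<bar>x * (1 - x) - y * (1 - y)\<bar> = \<bar>x - y\<bar> * \<bar>1 - x - y\<bar>" by (simp add: abs_mult)
  also have "\<dots> \<le> \<bar>x - y\<bar> * 1" using a by (intro mult_left_mono) auto
  finally show ?thesis by simp
qed

lemma sig_close:
  fixes x0 y0 x1 y1 u v u0 v0 :: real
  assumes "0 \<le> x0" "x0 \<le> 1" "0 \<le> y0" "y0 \<le> 1" "0 \<le> x1" "x1 \<le> 1" "0 \<le> y1" "y1 \<le> 1"
    and "\<bar>x0 - y0\<bar> \<le> \<eta>" "\<bar>x1 - y1\<bar> \<le> \<eta>"
    and "0 \<le> u" "u \<le> K1" "\<bar>u - u0\<bar> \<le> \<gamma>" "0 \<le> v" "v \<le> K2" "\<bar>v - v0\<bar> \<le> \<gamma>" "0 \<le> u0" "0 \<le> v0"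
  shows "\<bar>sqrt (u * (x0 * (1 - x0)) + v * (x1 * (1 - x1))) - sqrt (u0 * (y0 * (1 - y0)) + v0 * (y1 * (1 - y1)))\<bar>
     \<le> sqrt ((K1 + K2) * \<eta> + 2 * \<gamma>)"
proof -
  have nn: "0 \<le> z * (1 - z)" if "0 \<le> z" "z \<le> 1" for z :: real using that by simp
  have le1: "z * (1 - z) \<le> 1" if "0 \<le> z" "z \<le> 1" for z :: real
  proof -
    have "z * (1 - z) \<le> z * 1" using that by (intro mult_left_mono) auto
    then show ?thesis using that by simp
  qed
  have A: "\<bar>u * (x0 * (1 - x0)) - u0 * (y0 * (1 - y0))\<bar> \<le> K1 * \<eta> + \<gamma>"
  proof -
    have "u * (x0 * (1 - x0)) - u0 * (y0 * (1 - y0)) = u * (x0 * (1 - x0) - y0 * (1 - y0)) + (u - u0) * (y0 * (1 - y0))"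
      by algebra
    then have "\<bar>u * (x0 * (1 - x0)) - u0 * (y0 * (1 - y0))\<bar> \<le> \<bar>u * (x0 * (1 - x0) - y0 * (1 - y0))\<bar> + \<bar>(u - u0) * (y0 * (1 - y0))\<bar>"
      by (metis abs_triangle_ineq)
    also have "\<dots> = u * \<bar>x0 * (1 - x0) - y0 * (1 - y0)\<bar> + \<bar>u - u0\<bar> * (y0 * (1 - y0))"
      using assms nn[of y0] by (simp add: abs_mult)
    also have "\<dots> \<le> K1 * \<eta> + \<gamma> * 1"
      using assms var_lip[of x0 y0] le1[of y0] nn[of y0]
      by (intro add_mono mult_mono) auto
    finally show ?thesis by simp
  qed
  have B: "\<bar>v * (x1 * (1 - x1)) - v0 * (y1 * (1 - y1))\<bar> \<le> K2 * \<eta> + \<gamma>"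
  proof -
    have "v * (x1 * (1 - x1)) - v0 * (y1 * (1 - y1)) = v * (x1 * (1 - x1) - y1 * (1 - y1)) + (v - v0) * (y1 * (1 - y1))"
      by algebra
    then have "\<bar>v * (x1 * (1 - x1)) - v0 * (y1 * (1 - y1))\<bar> \<le> \<bar>v * (x1 * (1 - x1) - y1 * (1 - y1))\<bar> + \<bar>(v - v0) * (y1 * (1 - y1))\<bar>"
      by (metis abs_triangle_ineq)
    also have "\<dots> = v * \<bar>x1 * (1 - x1) - y1 * (1 - y1)\<bar> + \<bar>v - v0\<bar> * (y1 * (1 - y1))"
      using assms nn[of y1] by (simp add: abs_mult)
    also have "\<dots> \<le> K2 * \<eta> + \<gamma> * 1"
      using assms var_lip[of x1 y1] le1[of y1] nn[of y1]
      by (intro add_mono mult_mono) auto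
    finally show ?thesis by simp
  qed
  have "\<bar>sqrt (u * (x0 * (1 - x0)) + v * (x1 * (1 - x1))) - sqrt (u0 * (y0 * (1 - y0)) + v0 * (y1 * (1 - y1)))\<bar>
     \<le> sqrt \<bar>(u * (x0 * (1 - x0)) + v * (x1 * (1 - x1))) - (u0 * (y0 * (1 - y0)) + v0 * (y1 * (1 - y1)))\<bar>"
    using assms nn[of x0] nn[of x1] nn[of y0] nn[of y1]
    by (intro sqrt_diff_le) (auto intro!: add_nonneg_nonneg mult_nonneg_nonneg)
  also have "\<dots> \<le> sqrt ((K1 + K2) * \<eta> + 2 * \<gamma>)"
  proof -
    have tri: "\<And>a b c d::real. \<bar>a + b - (c + d)\<bar> \<le> \<bar>a - c\<bar> + \<bar>b - d\<bar>" by arith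
    show ?thesis
      using tri[of "u * (x0 * (1 - x0))" "v * (x1 * (1 - x1))" "u0 * (y0 * (1 - y0))" "v0 * (y1 * (1 - y1))"] A B
      by (simp only: real_sqrt_le_iff distrib_right)
  qed
  finally show ?thesis .
qed

lemma sumF: fixes h :: "nat \<Rightarrow> real" shows "k > 0 \<Longrightarrow> (\<Sum>i<k. c * (h i - p)) = c * (real k) * ((\<Sum>i<k. h i) / real k - p)"
  by (simp add: sum_distrib_left[symmetric] sum_subtractf field_simps)

theorem proposition3:
  fixes P Q :: "'a measure" and \<rho> :: "'a \<Rightarrow> real"
    and m n :: "nat \<Rightarrow> nat" and \<pi> \<alpha> :: real
  assumes "prob_space P" and "prob_space Q" and "sets P = sets Q"
    and "\<rho> \<in> borel_measurable P"
    and "\<forall>x \<in> space P. 0 \<le> \<rho> x \<and> \<rho> x \<le> 1"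
    and "\<forall>N\<ge>2. 0 < m N \<and> 0 < n N \<and> m N + n N = N \<and> m N \<le> n N"
    and "(\<lambda>N. real (m N) / real N) \<longlonglongrightarrow> \<pi>" and "0 < \<pi>" and "\<pi> < 1"
    and "0 < \<alpha>" and "\<alpha> < 1"
  shows "limsup (\<lambda>N. ereal (measure (sample_space P Q (m N) (n N))
            {\<omega> \<in> space (sample_space P Q (m N) (n N)).
               lambda_bayes_hat \<alpha> \<rho> (m N) (n N) (fst \<omega>) (snd \<omega>) > TV P Q}))
         \<le> ereal \<alpha>"
proof -
  note rhoP[measurable] = assms(4)
  interpret P: prob_space P by fact
  interpret Q: prob_space Q by fact
  have spQ: "space Q = space P" using assms(3) by (rule sets_eq_imp_space_eq[symmetric])
  have rhoQ[measurable]: "\<rho> \<in> borel_measurable Q"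
    using assms(4) measurable_cong_sets[OF assms(3) refl] by blast
  define h0 :: "'a \<Rightarrow> real" where "h0 x = 1 - of_bool (1/2 < \<rho> x)" for x
  define h1 :: "'a \<Rightarrow> real" where "h1 x = of_bool (1/2 < \<rho> x)" for x
  have h0m[measurable]: "h0 \<in> borel_measurable P" unfolding h0_def by measurable
  have h1m[measurable]: "h1 \<in> borel_measurable Q" unfolding h1_def by measurable
  define p0 where "p0 = integral\<^sup>L P h0"
  define p1 where "p1 = integral\<^sup>L Q h1"
  have h0_01: "h0 x = 0 \<or> h0 x = 1" for x by (simp add: h0_def)
  have h1_01: "h1 x = 0 \<or> h1 x = 1" for x by (simp add: h1_def)
  note b0 = bern_props[OF assms(1) h0m h0_01 p0_def]
  note b1 = bern_props[OF assms(2) h1m h1_01 p1_def]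
  define s0 where "s0 = p0 * (1 - p0)"
  define s1 where "s1 = p1 * (1 - p1)"
  have s0_nn: "0 \<le> s0" unfolding s0_def using b0 by simp
  have s1_nn: "0 \<le> s1" unfolding s1_def using b1 by simp
  define \<tau> where "\<tau> = sqrt (1 / \<pi> * s0 + 1 / (1 - \<pi>) * s1)"
  define q where "q = std_normal_quantile (1 - \<alpha>)"
  have Phi_q: "std_normal_cdf q = 1 - \<alpha>" unfolding q_def using assms by (intro Phi_quantile) auto
  define \<Omega> where "\<Omega> N = sample_space P Q (m N) (n N)" for N
  have psPi0: "prob_space (PiM {..<k} (\<lambda>_. P))" for k by (rule prob_space_PiM) (rule assms(1))
  have psPi1: "prob_space (PiM {..<k} (\<lambda>_. Q))" for k by (rule prob_space_PiM) (rule assms(2))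
  have ps: "prob_space (\<Omega> N)" for N
    unfolding \<Omega>_def sample_space_def by (rule prob_space_pair[OF psPi0 psPi1])
  have TVb: "p0 + p1 - 1 \<le> TV P Q"
  proof -
    define B where "B = {x \<in> space P. 1/2 < \<rho> x}"
    have Bs: "B \<in> sets P" unfolding B_def by measurable
    have BsQ: "B \<in> sets Q" using Bs assms(3) by simp
    have "p0 = integral\<^sup>L P (\<lambda>x. 1 - indicator B x)" unfolding p0_def
      by (intro Bochner_Integration.integral_cong) (auto simp: h0_def B_def indicator_def)
    also have "\<dots> = 1 - measure P B"
      using Bs by (subst Bochner_Integration.integral_diff) (auto simp: P.prob_space less_top[symmetric])
    finally have p0B: "p0 = 1 - measure P B" .
    have "p1 = integral\<^sup>L Q (indicator B)" unfolding p1_def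
      by (intro Bochner_Integration.integral_cong) (auto simp: h1_def B_def indicator_def spQ)
    also have "\<dots> = measure Q B" using BsQ by simp
    finally have p1B: "p1 = measure Q B" .
    have bdd: "bdd_above ((\<lambda>A. \<bar>measure P A - measure Q A\<bar>) ` sets P)"
    proof (rule bdd_aboveI[of _ 1])
      fix x assume "x \<in> (\<lambda>A. \<bar>measure P A - measure Q A\<bar>) ` sets P"
      then obtain A where "x = \<bar>measure P A - measure Q A\<bar>" by auto
      moreover have "measure P A \<le> 1" "measure Q A \<le> 1" by (auto intro: P.prob_le_1 Q.prob_le_1)
      moreover have "0 \<le> measure P A" "0 \<le> measure Q A" by auto
      ultimately show "x \<le> 1" by linarith
    qed
    have "\<bar>measure P B - measure Q B\<bar> \<le> TV P Q" unfolding TV_def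
      by (rule cSUP_upper[OF Bs bdd])
    then show ?thesis unfolding p0B p1B by linarith
  qed
  define A0 where "A0 N \<omega> = A0_hat \<rho> (m N) (fst \<omega>)" for N and \<omega> :: "(nat \<Rightarrow> 'a) \<times> (nat \<Rightarrow> 'a)"
  define A1 where "A1 N \<omega> = A1_hat \<rho> (n N) (snd \<omega>)" for N and \<omega> :: "(nat \<Rightarrow> 'a) \<times> (nat \<Rightarrow> 'a)"
  define Sig where "Sig N \<omega> = sqrt (real N) * sqrt (A0 N \<omega> * (1 - A0 N \<omega>) / real (m N) + A1 N \<omega> * (1 - A1 N \<omega>) / real (n N))" for N \<omega>
  define F where "F N x = (\<Sum>i<m N. sqrt (real N) / real (m N) * (h0 (x i) - p0))" for N x
  define G where "G N y = (\<Sum>j<n N. sqrt (real N) / real (n N) * (h1 (y j) - p1))" for N y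
  define T where "T N \<omega> = F N (fst \<omega>) + G N (snd \<omega>)" for N and \<omega> :: "(nat \<Rightarrow> 'a) \<times> (nat \<Rightarrow> 'a)"
  define F0 where "F0 N x = (\<Sum>i<m N. 1 / real (m N) * (h0 (x i) - p0))" for N x
  define G1 where "G1 N y = (\<Sum>j<n N. 1 / real (n N) * (h1 (y j) - p1))" for N y
  define D0 where "D0 N \<omega> = F0 N (fst \<omega>) + (\<lambda>_. 0) (snd \<omega>)" for N and \<omega> :: "(nat \<Rightarrow> 'a) \<times> (nat \<Rightarrow> 'a)"
  define D1 where "D1 N \<omega> = (\<lambda>_. 0) (fst \<omega>) + G1 N (snd \<omega>)" for N and \<omega> :: "(nat \<Rightarrow> 'a) \<times> (nat \<Rightarrow> 'a)"
  have Fm[measurable]: "F N \<in> borel_measurable (PiM {..<m N} (\<lambda>_. P))" for N unfolding F_def by measurable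
  have Gm[measurable]: "G N \<in> borel_measurable (PiM {..<n N} (\<lambda>_. Q))" for N unfolding G_def by measurable
  have F0m[measurable]: "F0 N \<in> borel_measurable (PiM {..<m N} (\<lambda>_. P))" for N unfolding F0_def by measurable
  have G1m[measurable]: "G1 N \<in> borel_measurable (PiM {..<n N} (\<lambda>_. Q))" for N unfolding G1_def by measurable
  have Tm[measurable]: "T N \<in> borel_measurable (\<Omega> N)" for N unfolding T_def \<Omega>_def sample_space_def by measurable
  have D0m[measurable]: "D0 N \<in> borel_measurable (\<Omega> N)" for N unfolding D0_def \<Omega>_def sample_space_def by measurable
  have D1m[measurable]: "D1 N \<in> borel_measurable (\<Omega> N)" for N unfolding D1_def \<Omega>_def sample_space_def by measurable
  have A0m[measurable]: "A0 N \<in> borel_measurable (\<Omega> N)" for N unfolding A0_def A0_hat_def \<Omega>_def sample_space_def by measurable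
  have A1m[measurable]: "A1 N \<in> borel_measurable (\<Omega> N)" for N unfolding A1_def A1_hat_def \<Omega>_def sample_space_def by measurable
  have Sigm[measurable]: "Sig N \<in> borel_measurable (\<Omega> N)" for N unfolding Sig_def by measurable

  have mn: "0 < m N" "0 < n N" "m N + n N = N" if "N \<ge> 2" for N using assms(6) that by auto
  have A0_eq: "A0 N \<omega> = (\<Sum>i<m N. h0 (fst \<omega> i)) / real (m N)" for N \<omega>
    unfolding A0_def A0_hat_def h0_def by simp
  have A1_eq: "A1 N \<omega> = (\<Sum>i<n N. h1 (snd \<omega> i)) / real (n N)" for N \<omega>
    unfolding A1_def A1_hat_def h1_def by simp
  have A0r: "0 \<le> A0 N \<omega> \<and> A0 N \<omega> \<le> 1" if "N \<ge> 2" for N \<omega>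
  proof -
    have "(\<Sum>i<m N. h0 (fst \<omega> i)) \<le> (\<Sum>i<m N. (1::real))"
      by (intro sum_mono) (auto simp: h0_def)
    moreover have "0 \<le> (\<Sum>i<m N. h0 (fst \<omega> i))"
      by (intro sum_nonneg) (auto simp: h0_def)
    ultimately show ?thesis using mn[OF that] unfolding A0_eq by (auto simp: divide_simps)
  qed
  have A1r: "0 \<le> A1 N \<omega> \<and> A1 N \<omega> \<le> 1" if "N \<ge> 2" for N \<omega>
  proof -
    have "(\<Sum>i<n N. h1 (snd \<omega> i)) \<le> (\<Sum>i<n N. (1::real))"
      by (intro sum_mono) (auto simp: h1_def)
    moreover have "0 \<le> (\<Sum>i<n N. h1 (snd \<omega> i))"
      by (intro sum_nonneg) (auto simp: h1_def)
    ultimately show ?thesis using mn[OF that] unfolding A1_eq by (auto simp: divide_simps)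
  qed
  have T_eq: "T N \<omega> = sqrt (real N) * ((A0 N \<omega> - p0) + (A1 N \<omega> - p1))" if "N \<ge> 2" for N \<omega>
    unfolding T_def F_def G_def A0_eq A1_eq sumF[OF mn(1)[OF that]] sumF[OF mn(2)[OF that]]
    using mn[OF that] by (simp add: ring_distribs)
  have D0_eq: "D0 N \<omega> = A0 N \<omega> - p0" if "N \<ge> 2" for N \<omega>
    unfolding D0_def F0_def A0_eq sumF[OF mn(1)[OF that]]
    using mn[OF that] by simp
  have D1_eq: "D1 N \<omega> = A1 N \<omega> - p1" if "N \<ge> 2" for N \<omega>
    unfolding D1_def G1_def A1_eq sumF[OF mn(2)[OF that]]
    using mn[OF that] by simp
  have ev_T: "T N \<omega> > q * Sig N \<omega>"
    if "N \<ge> 2" "lambda_bayes_hat \<alpha> \<rho> (m N) (n N) (fst \<omega>) (snd \<omega>) > TV P Q" for N \<omega>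
  proof -
    define \<sigma> where "\<sigma> = sqrt (A0 N \<omega> * (1 - A0 N \<omega>) / real (m N) + A1 N \<omega> * (1 - A1 N \<omega>) / real (n N))"
    have "lambda_bayes_hat \<alpha> \<rho> (m N) (n N) (fst \<omega>) (snd \<omega>) = A0 N \<omega> + A1 N \<omega> - 1 - q * \<sigma>"
      unfolding lambda_bayes_hat_def Let_def A0_def A1_def \<sigma>_def q_def by simp
    with that(2) TVb have "(A0 N \<omega> - p0) + (A1 N \<omega> - p1) > q * \<sigma>" by simp
    then have "sqrt (real N) * ((A0 N \<omega> - p0) + (A1 N \<omega> - p1)) > sqrt (real N) * (q * \<sigma>)"
      using that(1) by (intro mult_strict_left_mono) auto
    then show ?thesis unfolding T_eq[OF that(1)] Sig_def \<sigma>_def by (simp add: ac_simps)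
  qed
  define \<mu>0 where "\<mu>0 = distr P borel (\<lambda>x. h0 x - p0)"
  define \<mu>1 where "\<mu>1 = distr Q borel (\<lambda>x. h1 x - p1)"
  have charT: "char (distr (\<Omega> N) borel (T N)) t =
      char \<mu>0 (sqrt (real N) / real (m N) * t) ^ m N * char \<mu>1 (sqrt (real N) / real (n N) * t) ^ n N" for N t
  proof -
    have "char (distr (\<Omega> N) borel (T N)) t = char (distr (PiM {..<m N} (\<lambda>_. P)) borel (F N)) t
        * char (distr (PiM {..<n N} (\<lambda>_. Q)) borel (G N)) t"
      unfolding \<Omega>_def sample_space_def T_def[abs_def] by (rule char_pair_add[OF psPi0 psPi1 Fm Gm])
    also have "char (distr (PiM {..<m N} (\<lambda>_. P)) borel (F N)) t
        = char (distr P borel (\<lambda>y. sqrt (real N) / real (m N) * (h0 y - p0))) t ^ m N"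
      unfolding F_def[abs_def] by (rule char_PiM_sum[OF assms(1)]) measurable
    also have "char (distr P borel (\<lambda>y. sqrt (real N) / real (m N) * (h0 y - p0))) t
        = char \<mu>0 (sqrt (real N) / real (m N) * t)"
      unfolding \<mu>0_def by (rule char_scale[OF assms(1)]) measurable
    also have "char (distr (PiM {..<n N} (\<lambda>_. Q)) borel (G N)) t
        = char (distr Q borel (\<lambda>y. sqrt (real N) / real (n N) * (h1 y - p1))) t ^ n N"
      unfolding G_def[abs_def] by (rule char_PiM_sum[OF assms(2)]) measurable
    also have "char (distr Q borel (\<lambda>y. sqrt (real N) / real (n N) * (h1 y - p1))) t
        = char \<mu>1 (sqrt (real N) / real (n N) * t)"
      unfolding \<mu>1_def by (rule char_scale[OF assms(2)]) measurable
    finally show ?thesis .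
  qed
  have char0: "char (distr M borel (\<lambda>_. 0::real)) t = 1" if "prob_space M" for M :: "'b measure" and t
    using that by (simp add: char_distr_eq prob_space.prob_space)
  have charD0: "char (distr (\<Omega> N) borel (D0 N)) t = char \<mu>0 (1 / real (m N) * t) ^ m N" for N t
  proof -
    have "char (distr (\<Omega> N) borel (D0 N)) t = char (distr (PiM {..<m N} (\<lambda>_. P)) borel (F0 N)) t
        * char (distr (PiM {..<n N} (\<lambda>_. Q)) borel (\<lambda>_. 0)) t"
      unfolding \<Omega>_def sample_space_def D0_def[abs_def] by (rule char_pair_add[OF psPi0 psPi1 F0m]) simp
    also have "char (distr (PiM {..<m N} (\<lambda>_. P)) borel (F0 N)) t
        = char (distr P borel (\<lambda>y. 1 / real (m N) * (h0 y - p0))) t ^ m N"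
      unfolding F0_def[abs_def] by (rule char_PiM_sum[OF assms(1)]) measurable
    also have "char (distr P borel (\<lambda>y. 1 / real (m N) * (h0 y - p0))) t
        = char \<mu>0 (1 / real (m N) * t)"
      unfolding \<mu>0_def by (rule char_scale[OF assms(1)]) measurable
    finally show ?thesis by (simp add: char0[OF psPi1])
  qed
  have charD1: "char (distr (\<Omega> N) borel (D1 N)) t = char \<mu>1 (1 / real (n N) * t) ^ n N" for N t
  proof -
    have "char (distr (\<Omega> N) borel (D1 N)) t = char (distr (PiM {..<m N} (\<lambda>_. P)) borel (\<lambda>_. 0)) t
        * char (distr (PiM {..<n N} (\<lambda>_. Q)) borel (G1 N)) t"
      unfolding \<Omega>_def sample_space_def D1_def[abs_def] by (rule char_pair_add[OF psPi0 psPi1 _ G1m]) simp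
    also have "char (distr (PiM {..<n N} (\<lambda>_. Q)) borel (G1 N)) t
        = char (distr Q borel (\<lambda>y. 1 / real (n N) * (h1 y - p1))) t ^ n N"
      unfolding G1_def[abs_def] by (rule char_PiM_sum[OF assms(2)]) measurable
    also have "char (distr Q borel (\<lambda>y. 1 / real (n N) * (h1 y - p1))) t
        = char \<mu>1 (1 / real (n N) * t)"
      unfolding \<mu>1_def by (rule char_scale[OF assms(2)]) measurable
    finally show ?thesis by (simp add: char0[OF psPi0])
  qed
  have nat_lim: "filterlim k at_top sequentially"
    if kN: "(\<lambda>N. real (k N) / real N) \<longlonglongrightarrow> c" and cpos: "c > 0" for k :: "nat \<Rightarrow> nat" and c :: real
  proof -
    have "filterlim (\<lambda>N. real (k N) / real N * real N) at_top sequentially"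
      by (rule filterlim_tendsto_pos_mult_at_top[OF kN cpos filterlim_real_sequentially])
    moreover have "eventually (\<lambda>N. real (k N) / real N * real N = real (k N)) sequentially"
      using eventually_gt_at_top[of "0::nat"] by eventually_elim simp
    ultimately have r: "filterlim (\<lambda>N. real (k N)) at_top sequentially"
      by (rule filterlim_cong[OF refl refl, THEN iffD1, rotated])
    show ?thesis unfolding filterlim_at_top
    proof
      fix Z :: nat
      have "eventually (\<lambda>N. real Z \<le> real (k N)) sequentially"
        using r unfolding filterlim_at_top by (rule allE)
      then show "eventually (\<lambda>N. Z \<le> k N) sequentially" by eventually_elim simp
    qed
  qed
  have nN: "(\<lambda>N. real (n N) / real N) \<longlonglongrightarrow> 1 - \<pi>"
  proof -
    have "(\<lambda>N. 1 - real (m N) / real N) \<longlonglongrightarrow> 1 - \<pi>" by (intro tendsto_intros assms(7))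
    moreover have "eventually (\<lambda>N. 1 - real (m N) / real N = real (n N) / real N) sequentially"
      using eventually_ge_at_top[of "2::nat"]
    proof eventually_elim
      case (elim N)
      then have "real (m N) + real (n N) = real N" using mn[OF elim] by (metis of_nat_add)
      then show ?case using elim by (simp add: field_simps)
    qed
    ultimately show ?thesis by (rule tendsto_cong[THEN iffD1, rotated])
  qed
  have mlim: "filterlim m at_top sequentially" by (rule nat_lim[OF assms(7) assms(8)])
  have nlim: "filterlim n at_top sequentially" by (rule nat_lim[OF nN]) (use assms(9) in simp)
  have Nm: "(\<lambda>N. real N / real (m N)) \<longlonglongrightarrow> 1 / \<pi>"
    using tendsto_inverse[OF assms(7)] assms(8) by (simp add: inverse_divide inverse_eq_divide)
  have Nn: "(\<lambda>N. real N / real (n N)) \<longlonglongrightarrow> 1 / (1 - \<pi>)"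
    using tendsto_inverse[OF nN] assms(9) by (simp add: inverse_divide inverse_eq_divide)
  note core0 = core_limit[OF b0(1) b0(2) b0(3) b0(4), folded \<mu>0_def]
  note core1 = core_limit[OF b1(1) b1(2) b1(3) b1(4), folded \<mu>1_def]
  have charT_lim: "(\<lambda>N. char (distr (\<Omega> N) borel (T N)) t) \<longlonglongrightarrow> complex_of_real (exp (- ((\<tau> * t)^2) / 2))" for t
  proof -
    define cm where "cm N = t * sqrt (real N / real (m N))" for N
    define cn where "cn N = t * sqrt (real N / real (n N))" for N
    have c1: "cm \<longlonglongrightarrow> t * sqrt (1 / \<pi>)" unfolding cm_def by (intro tendsto_intros Nm)
    have c2: "cn \<longlonglongrightarrow> t * sqrt (1 / (1 - \<pi>))" unfolding cn_def by (intro tendsto_intros Nn)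
    have l: "(\<lambda>N. char \<mu>0 (cm N / sqrt (real (m N))) ^ m N * char \<mu>1 (cn N / sqrt (real (n N))) ^ n N)
       \<longlonglongrightarrow> complex_of_real (exp (- (p0 * (1 - p0)) * (t * sqrt (1 / \<pi>))^2 / 2))
          * complex_of_real (exp (- (p1 * (1 - p1)) * (t * sqrt (1 / (1 - \<pi>)))^2 / 2))"
      by (intro tendsto_mult core0[OF mlim c1] core1[OF nlim c2])
    have val: "exp (- (p0 * (1 - p0)) * (t * sqrt (1 / \<pi>))^2 / 2) * exp (- (p1 * (1 - p1)) * (t * sqrt (1 / (1 - \<pi>)))^2 / 2)
        = exp (- ((\<tau> * t)^2) / 2)"
    proof -
      have tau2: "\<tau>^2 = 1 / \<pi> * s0 + 1 / (1 - \<pi>) * s1" unfolding \<tau>_def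
        using s0_nn s1_nn assms(8,9) by simp
      have e1: "(t * sqrt (1 / \<pi>))^2 = t^2 / \<pi>" using assms(8) by (simp add: power_mult_distrib)
      have e2: "(t * sqrt (1 / (1 - \<pi>)))^2 = t^2 / (1 - \<pi>)" using assms(9) by (simp add: power_mult_distrib)
      have e3: "(\<tau> * t)^2 = (1 / \<pi> * s0 + 1 / (1 - \<pi>) * s1) * t^2" by (simp add: power_mult_distrib tau2)
      have pz: "\<pi> \<noteq> 0" "1 - \<pi> \<noteq> 0" using assms(8,9) by auto
      have "- (p0 * (1 - p0)) * (t * sqrt (1 / \<pi>))^2 / 2 + - (p1 * (1 - p1)) * (t * sqrt (1 / (1 - \<pi>)))^2 / 2
          = - ((\<tau> * t)^2) / 2"
        unfolding e1 e2 e3 s0_def s1_def using pz by (simp add: field_simps)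
      then show ?thesis by (simp add: exp_add[symmetric])
    qed
    have ev: "eventually (\<lambda>N. char \<mu>0 (cm N / sqrt (real (m N))) ^ m N * char \<mu>1 (cn N / sqrt (real (n N))) ^ n N
        = char (distr (\<Omega> N) borel (T N)) t) sequentially"
      using eventually_ge_at_top[of "2::nat"]
    proof eventually_elim
      case (elim N)
      have "cm N / sqrt (real (m N)) = sqrt (real N) / real (m N) * t"
        using mn[OF elim] unfolding cm_def by (simp add: real_sqrt_divide field_simps real_sqrt_mult_self)
      moreover have "cn N / sqrt (real (n N)) = sqrt (real N) / real (n N) * t"
        using mn[OF elim] unfolding cn_def by (simp add: real_sqrt_divide field_simps real_sqrt_mult_self)
      ultimately show ?case by (simp add: charT)
    qed
    have l': "(\<lambda>N. char \<mu>0 (cm N / sqrt (real (m N))) ^ m N * char \<mu>1 (cn N / sqrt (real (n N))) ^ n N)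
       \<longlonglongrightarrow> complex_of_real (exp (- ((\<tau> * t)^2) / 2))"
      using l unfolding of_real_mult[symmetric] val .
    show ?thesis by (rule tendsto_cong[THEN iffD1, OF ev l'])
  qed
  have sq_at_top: "filterlim (\<lambda>N. sqrt (real (k N))) at_top sequentially"
    if "filterlim k at_top sequentially" for k :: "nat \<Rightarrow> nat"
    by (rule filterlim_compose[OF sqrt_at_top filterlim_compose[OF filterlim_real_sequentially that]])
  have charD0_lim: "(\<lambda>N. char (distr (\<Omega> N) borel (D0 N)) t) \<longlonglongrightarrow> 1" for t
  proof -
    have c1: "(\<lambda>N. t / sqrt (real (m N))) \<longlonglongrightarrow> 0"
      by (rule tendsto_divide_0[OF tendsto_const filterlim_at_top_imp_at_infinity[OF sq_at_top[OF mlim]]])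
    have l: "(\<lambda>N. char \<mu>0 (t / sqrt (real (m N)) / sqrt (real (m N))) ^ m N) \<longlonglongrightarrow> 1"
      using core0[OF mlim c1] by simp
    have ev: "eventually (\<lambda>N. char \<mu>0 (t / sqrt (real (m N)) / sqrt (real (m N))) ^ m N
        = char (distr (\<Omega> N) borel (D0 N)) t) sequentially"
      using eventually_ge_at_top[of "2::nat"]
    proof eventually_elim
      case (elim N)
      have "t / sqrt (real (m N)) / sqrt (real (m N)) = 1 / real (m N) * t"
        using mn[OF elim] by (simp add: field_simps real_sqrt_mult_self)
      then show ?case by (simp add: charD0)
    qed
    show ?thesis by (rule tendsto_cong[THEN iffD1, OF ev l])
  qed
  have charD1_lim: "(\<lambda>N. char (distr (\<Omega> N) borel (D1 N)) t) \<longlonglongrightarrow> 1" for t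
  proof -
    have c1: "(\<lambda>N. t / sqrt (real (n N))) \<longlonglongrightarrow> 0"
      by (rule tendsto_divide_0[OF tendsto_const filterlim_at_top_imp_at_infinity[OF sq_at_top[OF nlim]]])
    have l: "(\<lambda>N. char \<mu>1 (t / sqrt (real (n N)) / sqrt (real (n N))) ^ n N) \<longlonglongrightarrow> 1"
      using core1[OF nlim c1] by simp
    have ev: "eventually (\<lambda>N. char \<mu>1 (t / sqrt (real (n N)) / sqrt (real (n N))) ^ n N
        = char (distr (\<Omega> N) borel (D1 N)) t) sequentially"
      using eventually_ge_at_top[of "2::nat"]
    proof eventually_elim
      case (elim N)
      have "t / sqrt (real (n N)) / sqrt (real (n N)) = 1 / real (n N) * t"
        using mn[OF elim] by (simp add: field_simps real_sqrt_mult_self)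
      then show ?case by (simp add: charD1)
    qed
    show ?thesis by (rule tendsto_cong[THEN iffD1, OF ev l])
  qed
  have tau_nn: "0 \<le> \<tau>" unfolding \<tau>_def using s0_nn s1_nn assms(8,9) by simp
  show ?thesis
  proof (cases "\<tau> = 0")
    case True
    have "1 / \<pi> * s0 + 1 / (1 - \<pi>) * s1 = 0" using True s0_nn s1_nn assms(8,9) unfolding \<tau>_def by simp
    moreover have "0 \<le> 1 / \<pi> * s0" "0 \<le> 1 / (1 - \<pi>) * s1" using s0_nn s1_nn assms(8,9) by auto
    ultimately have "1 / \<pi> * s0 = 0" "1 / (1 - \<pi>) * s1 = 0" by linarith+
    then have s00: "s0 = 0" and s10: "s1 = 0" using assms(8,9) by auto
    have AEh: "AE x in M. h x = p" if Mp: "prob_space M" and hm[measurable]: "h \<in> borel_measurable M"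
      and hb: "\<And>x. \<bar>h x - p\<bar> \<le> 1"
      and v: "integral\<^sup>L (distr M borel (\<lambda>x. h x - p)) (\<lambda>x. x^2) = 0" for M :: "'a measure" and h :: "'a \<Rightarrow> real" and p :: real
    proof -
      interpret M: prob_space M by (rule Mp)
      have "integral\<^sup>L M (\<lambda>x. (h x - p)^2) = 0" using v by (simp add: integral_distr)
      moreover have "integrable M (\<lambda>x. (h x - p)^2)"
        using hb by (intro M.integrable_const_bound[of _ 1]) (auto simp: abs_square_le_1)
      ultimately have "AE x in M. (h x - p)^2 = 0"
        by (subst integral_nonneg_eq_0_iff_AE[symmetric]) auto
      then show ?thesis by eventually_elim simp
    qed
    have hb0: "\<bar>h0 x - p0\<bar> \<le> 1" for x using h0_01[of x] b0(5,6) by auto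
    have hb1: "\<bar>h1 x - p1\<bar> \<le> 1" for x using h1_01[of x] b1(5,6) by auto
    have AE0: "AE x in P. h0 x = p0" by (rule AEh[OF assms(1) h0m hb0]) (use b0(4) s00 in \<open>simp add: s0_def\<close>)
    have AE1: "AE x in Q. h1 x = p1" by (rule AEh[OF assms(2) h1m hb1]) (use b1(4) s10 in \<open>simp add: s1_def\<close>)
    define good where "good N \<omega> \<longleftrightarrow> (\<forall>i\<in>{..<m N}. h0 (fst \<omega> i) = p0) \<and> (\<forall>j\<in>{..<n N}. h1 (snd \<omega> j) = p1)"
      for N and \<omega> :: "(nat \<Rightarrow> 'a) \<times> (nat \<Rightarrow> 'a)"
    have goodm: "{\<omega> \<in> space (\<Omega> N). \<not> good N \<omega>} \<in> sets (\<Omega> N)" for N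
      unfolding good_def \<Omega>_def sample_space_def by measurable
    have AEg: "AE \<omega> in \<Omega> N. good N \<omega>" for N
    proof -
      interpret S: pair_sigma_finite "PiM {..<m N} (\<lambda>_. P)" "PiM {..<n N} (\<lambda>_. Q)"
        unfolding pair_sigma_finite_def using prob_space_imp_sigma_finite[OF psPi0] prob_space_imp_sigma_finite[OF psPi1] by blast
      have a0: "AE x in PiM {..<m N} (\<lambda>_. P). \<forall>i\<in>{..<m N}. h0 (x i) = p0"
      proof (intro AE_finite_allI)
        fix i assume "i \<in> {..<m N}"
        then show "AE x in PiM {..<m N} (\<lambda>_. P). h0 (x i) = p0"
          using AE_PiM_component[of "{..<m N}" "\<lambda>_. P" i "\<lambda>x. h0 x = p0"] assms(1) AE0 by auto
      qed simp
      have a1: "AE y in PiM {..<n N} (\<lambda>_. Q). \<forall>j\<in>{..<n N}. h1 (y j) = p1"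
      proof (intro AE_finite_allI)
        fix i assume "i \<in> {..<n N}"
        then show "AE x in PiM {..<n N} (\<lambda>_. Q). h1 (x i) = p1"
          using AE_PiM_component[of "{..<n N}" "\<lambda>_. Q" i "\<lambda>x. h1 x = p1"] assms(2) AE1 by auto
      qed simp
      have "AE \<omega> in PiM {..<m N} (\<lambda>_. P) \<Otimes>\<^sub>M PiM {..<n N} (\<lambda>_. Q). good N \<omega>"
      proof (rule S.AE_pair_measure)
        show "{x \<in> space (PiM {..<m N} (\<lambda>_. P) \<Otimes>\<^sub>M PiM {..<n N} (\<lambda>_. Q)). good N x}
            \<in> sets (PiM {..<m N} (\<lambda>_. P) \<Otimes>\<^sub>M PiM {..<n N} (\<lambda>_. Q))"
          unfolding good_def by measurable
        show "AE x in PiM {..<m N} (\<lambda>_. P). AE y in PiM {..<n N} (\<lambda>_. Q). good N (x, y)"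
          using a0
        proof eventually_elim
          case (elim x)
          show ?case using a1 by eventually_elim (use elim in \<open>simp add: good_def\<close>)
        qed
      qed
      then show ?thesis unfolding \<Omega>_def sample_space_def .
    qed
    have zero: "measure (\<Omega> N) {\<omega> \<in> space (\<Omega> N). lambda_bayes_hat \<alpha> \<rho> (m N) (n N) (fst \<omega>) (snd \<omega>) > TV P Q} = 0"
      if N2: "N \<ge> 2" for N
    proof -
      interpret O: prob_space "\<Omega> N" by (rule ps)
      have null: "emeasure (\<Omega> N) {\<omega> \<in> space (\<Omega> N). \<not> good N \<omega>} = 0"
        using AEg[of N] AE_iff_measurable[OF goodm refl] by blast
      have sub: "{\<omega> \<in> space (\<Omega> N). lambda_bayes_hat \<alpha> \<rho> (m N) (n N) (fst \<omega>) (snd \<omega>) > TV P Q}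
          \<subseteq> {\<omega> \<in> space (\<Omega> N). \<not> good N \<omega>}"
      proof safe
        fix \<omega> assume sp: "\<omega> \<in> space (\<Omega> N)" and lam: "TV P Q < lambda_bayes_hat \<alpha> \<rho> (m N) (n N) (fst \<omega>) (snd \<omega>)"
          and g: "good N \<omega>"
        have "A0 N \<omega> = p0" unfolding A0_eq using g mn[OF N2] by (simp add: good_def)
        moreover have "A1 N \<omega> = p1" unfolding A1_eq using g mn[OF N2] by (simp add: good_def)
        moreover have z0: "p0 * (1 - p0) = 0" and z1: "p1 * (1 - p1) = 0" using s00 s10 by (simp_all only: s0_def s1_def)
        moreover have "lambda_bayes_hat \<alpha> \<rho> (m N) (n N) (fst \<omega>) (snd \<omega>) = A0 N \<omega> + A1 N \<omega> - 1
            - q * sqrt (A0 N \<omega> * (1 - A0 N \<omega>) / real (m N) + A1 N \<omega> * (1 - A1 N \<omega>) / real (n N))"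
          unfolding lambda_bayes_hat_def Let_def A0_def A1_def q_def by simp
        ultimately have "lambda_bayes_hat \<alpha> \<rho> (m N) (n N) (fst \<omega>) (snd \<omega>) = p0 + p1 - 1"
          by (simp only: z0 z1) simp
        with lam TVb show False by simp
      qed
      have "measure (\<Omega> N) {\<omega> \<in> space (\<Omega> N). lambda_bayes_hat \<alpha> \<rho> (m N) (n N) (fst \<omega>) (snd \<omega>) > TV P Q}
          \<le> measure (\<Omega> N) {\<omega> \<in> space (\<Omega> N). \<not> good N \<omega>}"
        by (rule O.finite_measure_mono[OF sub goodm])
      also have "\<dots> = 0" using null by (simp add: measure_def)
      finally show ?thesis by (rule antisym) simp
    qed
    show ?thesis unfolding \<Omega>_def[symmetric]
    proof (rule Limsup_bounded)
      show "\<forall>\<^sub>F N in sequentially. ereal (measure (\<Omega> N) {\<omega> \<in> space (\<Omega> N).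
          TV P Q < lambda_bayes_hat \<alpha> \<rho> (m N) (n N) (fst \<omega>) (snd \<omega>)}) \<le> ereal \<alpha>"
        using eventually_ge_at_top[of "2::nat"] by eventually_elim (use zero assms(10) in simp)
    qed
  next
    case False
    then have tau_pos: "\<tau> > 0" using tau_nn by simp
    have cdfT: "(\<lambda>N. measure (\<Omega> N) {\<omega> \<in> space (\<Omega> N). T N \<omega> \<le> x}) \<longlonglongrightarrow> std_normal_cdf (x / \<tau>)" for x
      by (rule normal_limit_cdf[OF ps Tm charT_lim tau_pos])
    have D0p: "(\<lambda>N. measure (\<Omega> N) {\<omega> \<in> space (\<Omega> N). \<bar>D0 N \<omega>\<bar> > \<eta>}) \<longlonglongrightarrow> 0" if "\<eta> > 0" for \<eta>
      by (rule zero_limit_prob[OF ps D0m charD0_lim that])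
    have D1p: "(\<lambda>N. measure (\<Omega> N) {\<omega> \<in> space (\<Omega> N). \<bar>D1 N \<omega>\<bar> > \<eta>}) \<longlonglongrightarrow> 0" if "\<eta> > 0" for \<eta>
      by (rule zero_limit_prob[OF ps D1m charD1_lim that])
    show ?thesis unfolding \<Omega>_def[symmetric]
    proof (rule ereal_le_epsilon2)
      fix e :: real assume e: "0 < e"
      have "\<exists>d>0. \<forall>z. z \<noteq> q \<and> norm (z - q) < d \<longrightarrow> norm (std_normal_cdf z - std_normal_cdf q) < e / 2"
      proof -
        have "\<forall>r>0. \<exists>s>0. \<forall>z. z \<noteq> q \<and> norm (z - q) < s \<longrightarrow> norm (std_normal_cdf z - std_normal_cdf q) < r"
          using Phi_cont[of q] unfolding isCont_def LIM_eq .
        then show ?thesis using e by (meson half_gt_zero)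
      qed
      then obtain d where d: "d > 0"
        and dd: "\<And>z. z \<noteq> q \<Longrightarrow> \<bar>z - q\<bar> < d \<Longrightarrow> \<bar>std_normal_cdf z - std_normal_cdf q\<bar> < e / 2" by auto
      define \<epsilon> where "\<epsilon> = \<tau> * d / 2"
      have eps: "\<epsilon> > 0" unfolding \<epsilon>_def using tau_pos d by simp
      define x0 where "x0 = q * \<tau> - \<epsilon>"
      have x0\<tau>: "x0 / \<tau> = q - d / 2" using tau_pos unfolding x0_def \<epsilon>_def by (simp add: field_simps)
      have "\<bar>std_normal_cdf (q - d / 2) - std_normal_cdf q\<bar> < e / 2" using d by (intro dd) auto
      then have Phix0: "1 - std_normal_cdf (x0 / \<tau>) < \<alpha> + e / 2" unfolding x0\<tau> Phi_q by linarith
      have ev1: "eventually (\<lambda>N. 1 - measure (\<Omega> N) {\<omega> \<in> space (\<Omega> N). T N \<omega> \<le> x0} < \<alpha> + e / 2) sequentially"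
        by (rule order_tendstoD(2)[OF tendsto_diff[OF tendsto_const cdfT] Phix0])
      define K1 where "K1 = 2 / \<pi>"
      define K2 where "K2 = 2 / (1 - \<pi>)"
      have Kpos: "K1 > 0" "K2 > 0" unfolding K1_def K2_def using assms(8,9) by auto
      define r where "r = (\<epsilon> / (\<bar>q\<bar> + 1))^2"
      have rpos: "r > 0" unfolding r_def using eps by simp
      define \<eta> where "\<eta> = r / (2 * (K1 + K2))"
      define \<gamma> where "\<gamma> = r / 4"
      have etapos: "\<eta> > 0" unfolding \<eta>_def using rpos Kpos by simp
      have gpos: "\<gamma> > 0" unfolding \<gamma>_def using rpos by simp
      have Kr: "(K1 + K2) * \<eta> + 2 * \<gamma> = r" unfolding \<eta>_def \<gamma>_def using Kpos by (simp add: field_simps)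
      have ev2: "eventually (\<lambda>N. measure (\<Omega> N) {\<omega> \<in> space (\<Omega> N). \<bar>D0 N \<omega>\<bar> > \<eta>} < e / 4) sequentially"
        by (rule order_tendstoD(2)[OF D0p[OF etapos]]) (use e in simp)
      have ev3: "eventually (\<lambda>N. measure (\<Omega> N) {\<omega> \<in> space (\<Omega> N). \<bar>D1 N \<omega>\<bar> > \<eta>} < e / 4) sequentially"
        by (rule order_tendstoD(2)[OF D1p[OF etapos]]) (use e in simp)
      have ev4: "eventually (\<lambda>N. \<bar>real N / real (m N) - 1 / \<pi>\<bar> < min \<gamma> (1 / \<pi>)) sequentially"
        using tendstoD[OF Nm, of "min \<gamma> (1 / \<pi>)"] gpos assms(8) by (simp add: dist_real_def)
      have ev5: "eventually (\<lambda>N. \<bar>real N / real (n N) - 1 / (1 - \<pi>)\<bar> < min \<gamma> (1 / (1 - \<pi>))) sequentially"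
        using tendstoD[OF Nn, of "min \<gamma> (1 / (1 - \<pi>))"] gpos assms(9) by (simp add: dist_real_def)
      have "eventually (\<lambda>N. ereal (measure (\<Omega> N) {\<omega> \<in> space (\<Omega> N).
          TV P Q < lambda_bayes_hat \<alpha> \<rho> (m N) (n N) (fst \<omega>) (snd \<omega>)}) \<le> ereal \<alpha> + ereal e) sequentially"
        using ev1 ev2 ev3 ev4 ev5 eventually_ge_at_top[of "2::nat"]
      proof eventually_elim
        case (elim N)
        interpret O: prob_space "\<Omega> N" by (rule ps)
        have N2: "N \<ge> 2" using elim by simp
        define E where "E = {\<omega> \<in> space (\<Omega> N). TV P Q < lambda_bayes_hat \<alpha> \<rho> (m N) (n N) (fst \<omega>) (snd \<omega>)}"
        define ET where "ET = {\<omega> \<in> space (\<Omega> N). T N \<omega> \<le> x0}"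
        define E0 where "E0 = {\<omega> \<in> space (\<Omega> N). \<bar>D0 N \<omega>\<bar> > \<eta>}"
        define E1 where "E1 = {\<omega> \<in> space (\<Omega> N). \<bar>D1 N \<omega>\<bar> > \<eta>}"
        have u1: "real N / real (m N) \<le> K1" "\<bar>real N / real (m N) - 1 / \<pi>\<bar> \<le> \<gamma>"
          using elim(4) unfolding K1_def by auto
        have u2: "real N / real (n N) \<le> K2" "\<bar>real N / real (n N) - 1 / (1 - \<pi>)\<bar> \<le> \<gamma>"
          using elim(5) unfolding K2_def by auto
        have sub: "E \<subseteq> (space (\<Omega> N) - ET) \<union> E0 \<union> E1"
        proof
          fix \<omega> assume "\<omega> \<in> E"
          then have sp: "\<omega> \<in> space (\<Omega> N)" and lam: "TV P Q < lambda_bayes_hat \<alpha> \<rho> (m N) (n N) (fst \<omega>) (snd \<omega>)"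
            by (auto simp: E_def)
          show "\<omega> \<in> (space (\<Omega> N) - ET) \<union> E0 \<union> E1"
          proof (cases "\<bar>D0 N \<omega>\<bar> \<le> \<eta> \<and> \<bar>D1 N \<omega>\<bar> \<le> \<eta>")
            case True
            have a0: "\<bar>A0 N \<omega> - p0\<bar> \<le> \<eta>" using True D0_eq[OF N2] by simp
            have a1: "\<bar>A1 N \<omega> - p1\<bar> \<le> \<eta>" using True D1_eq[OF N2] by simp
            have SigEq: "Sig N \<omega> = sqrt (real N / real (m N) * (A0 N \<omega> * (1 - A0 N \<omega>))
                + real N / real (n N) * (A1 N \<omega> * (1 - A1 N \<omega>)))"
              unfolding Sig_def real_sqrt_mult[symmetric] by (simp add: field_simps)
            have tauEq: "\<tau> = sqrt (1 / \<pi> * (p0 * (1 - p0)) + 1 / (1 - \<pi>) * (p1 * (1 - p1)))"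
              unfolding \<tau>_def s0_def s1_def ..
            have "\<bar>Sig N \<omega> - \<tau>\<bar> \<le> sqrt ((K1 + K2) * \<eta> + 2 * \<gamma>)"
              unfolding SigEq tauEq
              by (rule sig_close) (use A0r[OF N2] A1r[OF N2] b0(5,6) b1(5,6) a0 a1 u1 u2 assms(8,9) in auto)
            also have "\<dots> = \<epsilon> / (\<bar>q\<bar> + 1)" unfolding Kr r_def using eps by simp
            finally have sc: "\<bar>Sig N \<omega> - \<tau>\<bar> \<le> \<epsilon> / (\<bar>q\<bar> + 1)" .
            have "\<bar>q * Sig N \<omega> - q * \<tau>\<bar> = \<bar>q\<bar> * \<bar>Sig N \<omega> - \<tau>\<bar>" by (simp add: abs_mult[symmetric] right_diff_distrib)
            also have "\<dots> \<le> \<bar>q\<bar> * (\<epsilon> / (\<bar>q\<bar> + 1))" using sc by (intro mult_left_mono) auto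
            also have "\<dots> \<le> \<epsilon>" using eps by (simp add: field_simps)
            finally have "\<bar>q * Sig N \<omega> - q * \<tau>\<bar> \<le> \<epsilon>" .
            then have "x0 < T N \<omega>" using ev_T[OF N2 lam] unfolding x0_def by (simp add: abs_le_iff)
            then show ?thesis using sp by (auto simp: ET_def)
          next
            case False
            then show ?thesis using sp by (auto simp: E0_def E1_def)
          qed
        qed
        have ETm: "ET \<in> sets (\<Omega> N)" unfolding ET_def by measurable
        have E0m: "E0 \<in> sets (\<Omega> N)" unfolding E0_def by measurable
        have E1m: "E1 \<in> sets (\<Omega> N)" unfolding E1_def by measurable
        have "measure (\<Omega> N) E \<le> measure (\<Omega> N) ((space (\<Omega> N) - ET) \<union> E0 \<union> E1)"
          by (rule O.finite_measure_mono[OF sub]) (use ETm E0m E1m in auto)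
        also have "\<dots> \<le> measure (\<Omega> N) ((space (\<Omega> N) - ET) \<union> E0) + measure (\<Omega> N) E1"
          by (rule measure_Un_le) (use ETm E0m E1m in auto)
        also have "measure (\<Omega> N) ((space (\<Omega> N) - ET) \<union> E0) \<le> measure (\<Omega> N) (space (\<Omega> N) - ET) + measure (\<Omega> N) E0"
          by (rule measure_Un_le) (use ETm E0m in auto)
        also have "measure (\<Omega> N) (space (\<Omega> N) - ET) = 1 - measure (\<Omega> N) ET"
          by (rule O.prob_compl[OF ETm])
        finally have "measure (\<Omega> N) E < \<alpha> + e / 2 + e / 4 + e / 4"
          using elim(1,2,3) unfolding ET_def E0_def E1_def by linarith
        then show ?case unfolding E_def by simp
      qed
      then show "limsup (\<lambda>N. ereal (measure (\<Omega> N) {\<omega> \<in> space (\<Omega> N).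
          TV P Q < lambda_bayes_hat \<alpha> \<rho> (m N) (n N) (fst \<omega>) (snd \<omega>)})) \<le> ereal \<alpha> + ereal e"
        by (rule Limsup_bounded)
    qed
  qed
qed

end
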